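(* Let $(\varGamma,C)$ be a split-step SUSYQW whose coin has the form $C(x)=C(\mathrm R)$ for $x\ge1$ and $C(x)=C(\mathrm L)$ for $x\le0$, where $C(\mathrm L),C(\mathrm R)$ are nontrivial. Let $d_\pm=\dim\ker Q_{\epsilon_\pm}$. (1) If $b(\mathrm L)=0$ and $b(\mathrm R)=0$ (Type I), then $d_\pm=1$ if $a(\mathrm L)a(\mathrm R)<0$ and $d_\pm=0$ if $a(\mathrm L)a(\mathrm R)>0$. (2) If $b(\mathrm L)=0$ and $b(\mathrm R)\ne0$ (Type II), then $d_\pm=1$ if $\mp p+a(\mathrm L)a(\mathrm R)<0$ and $d_\pm=0$ if $\mp p+a(\mathrm L)a(\mathrm R)\ge0$. (3) If $b(\mathrm L)\neq0$ and $b(\mathrm R)=0$ (Type II'), then $d_\pm=1$ if $\pm p+a(\mathrm L)a(\mathrm R)<0$ and $d_\pm=0$ if $\pm p+a(\mathrm L)a(\mathrm R)\ge0$. (4) If $b(\mathrm L)\ne0$ and $b(\mathrm R)\ne0$ (Type III), then $d_\pm=1$ if $a(\mathrm R)<\pm p<a(\mathrm L)$ or $a(\mathrm L)<\mp p<a(\mathrm R)$, and $d_\pm=0$ otherwise. (In each case the upper signs give $d_+$ and the lower signs give $d_-$.)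
   Context: Let $L$ be the left shift $(L\Psi)(x)=\Psi(x+1)$ on $\ell^2(\mathbb Z)$. A split-step SUSYQW is $\varGamma=\begin{pmatrix} p & qL\\ \overline{q}L^* & -p\end{pmatrix}$, $C=\begin{pmatrix} a_1 & \overline{b}\\ b & a_2\end{pmatrix}$ on $\ell^2(\mathbb Z)\oplus\ell^2(\mathbb Z)$ with $p\in\mathbb R$, $q\in\mathbb C\setminus\{0\}$, $p^2+|q|^2=1$, $\theta=\operatorname{Arg}q$, real sequences $a_1,a_2$ and complex sequence $b$ on $\mathbb Z$ (as multiplication operators) with $a_j(x)^2+|b(x)|^2=1$, $b(x)(a_1(x)+a_2(x))=0$. Write $C(x)=\begin{pmatrix} a_1(x)&\overline{b(x)}\\ b(x)&a_2(x)\end{pmatrix}$. A $2\times2$ unitary Hermitian matrix is trivial if it equals $\pm I$; for nontrivial $C(\sharp)$ (entries $a_j(\sharp),b(\sharp)$) one has $a_1(\sharp)=-a_2(\sharp)=:a(\sharp)$ and $a(\sharp)^2+|b(\sharp)|^2=1$. $Q_{\epsilon_\pm}$ are the operators on $\ell^2(\mathbb Z)$ defined by $-2iQ_{\epsilon_\pm}=(1\pm p)e^{i\theta}Lb-(1\mp p)e^{-i\theta}\overline{b}L^*\pm|q|(a_2(\cdot+1)-a_1)$ (products are compositions with multiplication operators). *)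

theory Defs
  imports "HOL-Analysis.Analysis" "HOL-Library.Function_Algebras" "HOL-Library.Extended_Nat"
begin

definition cscale :: "complex \<Rightarrow> (int \<Rightarrow> complex) \<Rightarrow> (int \<Rightarrow> complex)" where
  "cscale c f = (\<lambda>x. c * f x)"

definition in_l2 :: "(int \<Rightarrow> complex) \<Rightarrow> bool" where
  "in_l2 \<psi> \<longleftrightarrow> (\<lambda>x. (cmod (\<psi> x))\<^sup>2) summable_on UNIV"

definition ker_l2 :: "((int \<Rightarrow> complex) \<Rightarrow> (int \<Rightarrow> complex)) \<Rightarrow> (int \<Rightarrow> complex) set" where
  "ker_l2 T = {\<psi>. in_l2 \<psi> \<and> T \<psi> = (\<lambda>x. 0)}"

definition cdim :: "(int \<Rightarrow> complex) set \<Rightarrow> enat" where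
  "cdim V = (if \<exists>B. finite B \<and> B \<subseteq> V \<and> module.span cscale B = V
             then enat (vector_space.dim cscale V) else \<infinity>)"

text \<open>The operator Q_eps, with s = 1 for eps_+ and s = -1 for eps_-.
  -2i Q = (1 + s p) e^{i theta} L b - (1 - s p) e^{-i theta} conj(b) L^* + s |q| (a2(.+1) - a1),
  with (L psi)(x) = psi(x+1), (L^* psi)(x) = psi(x-1), theta = Arg q.\<close>
definition Qeps :: "real \<Rightarrow> real \<Rightarrow> complex \<Rightarrow> (int \<Rightarrow> real) \<Rightarrow> (int \<Rightarrow> real) \<Rightarrow> (int \<Rightarrow> complex)
    \<Rightarrow> (int \<Rightarrow> complex) \<Rightarrow> (int \<Rightarrow> complex)" where
  "Qeps s p q a1 a2 b \<psi> = (\<lambda>x. (\<i> / 2) *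
      ( complex_of_real (1 + s * p) * cis (Arg q) * b (x + 1) * \<psi> (x + 1)
      - complex_of_real (1 - s * p) * cis (- Arg q) * cnj (b x) * \<psi> (x - 1)
      + complex_of_real (s * cmod q * (a2 (x + 1) - a1 x)) * \<psi> x))"

definition dQ :: "real \<Rightarrow> real \<Rightarrow> complex \<Rightarrow> (int \<Rightarrow> real) \<Rightarrow> (int \<Rightarrow> real) \<Rightarrow> (int \<Rightarrow> complex) \<Rightarrow> enat" where
  "dQ s p q a1 a2 b = cdim (ker_l2 (Qeps s p q a1 a2 b))"

text \<open>A coin value C(x) (entries a1, a2, b) is trivial iff it equals I or -I.\<close>
definition trivial_coin :: "real \<Rightarrow> real \<Rightarrow> complex \<Rightarrow> bool" where
  "trivial_coin a1 a2 b \<longleftrightarrow> (a1 = 1 \<and> a2 = 1 \<and> b = 0) \<or> (a1 = -1 \<and> a2 = -1 \<and> b = 0)"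

end

theory Submission
  imports Defs
begin



lemma vs_cscale: "vector_space cscale"
  by unfold_locales (auto simp: cscale_def fun_eq_iff algebra_simps)

interpretation vs: vector_space cscale by (rule vs_cscale)

lemma cdim_zero: "cdim {0} = 0"
proof -
  have "\<exists>B. finite B \<and> B \<subseteq> {0::int\<Rightarrow>complex} \<and> vs.span B = {0}" by (intro exI[of _ "{}"]) simp
  hence "cdim {0} = enat (vs.dim {0})" unfolding cdim_def by (rule if_P)
  also have "vs.dim {0} = 0" using vs.dim_span_eq_card_independent[OF vs.independent_empty] by simp
  finally show ?thesis by (simp only: zero_enat_def)
qed

lemma cdim_one: assumes "v \<noteq> 0" "V = range (\<lambda>c. cscale c v)" shows "cdim V = 1"
proof -
  have sp: "vs.span {v} = V" using assms(2) vs.span_singleton by simp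
  have "v \<in> V" using assms(2) by (auto simp: cscale_def intro!: image_eqI[where x=1])
  hence "\<exists>B. finite B \<and> B \<subseteq> V \<and> vs.span B = V" using sp by (intro exI[of _ "{v}"]) simp
  hence "cdim V = enat (vs.dim V)" unfolding cdim_def by (rule if_P)
  also have "vs.dim V = 1"
    using vs.dim_span_eq_card_independent[of "{v}"] sp assms(1) vs.independent_insert[of v "{}"] by simp
  finally show ?thesis by (simp only: one_enat_def)
qed

lemma in_l2_scale: "in_l2 \<psi> \<Longrightarrow> in_l2 (cscale c \<psi>)"
  unfolding in_l2_def cscale_def
  using summable_on_cmult_right[of "\<lambda>x. (cmod (\<psi> x))\<^sup>2" UNIV "(cmod c)^2"]
  by (simp add: norm_mult power_mult_distrib)

lemma in_l2_zero: "in_l2 (\<lambda>x. 0)" unfolding in_l2_def by simp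

lemma in_l2_decay:
  assumes "in_l2 \<psi>"
  shows "(\<lambda>n. \<psi> (int n)) \<longlonglongrightarrow> 0" "(\<lambda>n. \<psi> (- int n)) \<longlonglongrightarrow> 0"
proof -
  let ?f = "\<lambda>x. (cmod (\<psi> x))\<^sup>2"
  have S: "?f summable_on UNIV" using assms by (simp add: in_l2_def)
  { fix h :: "nat \<Rightarrow> int" assume inj: "inj h"
    have "?f summable_on (range h)" using summable_on_subset[OF S] by simp
    hence "(?f \<circ> h) summable_on UNIV" using summable_on_reindex[of h UNIV ?f] inj by simp
    hence "summable (?f \<circ> h)" using summable_on_UNIV_nonneg_real_iff[of "?f \<circ> h"] by simp
    hence "(?f \<circ> h) \<longlonglongrightarrow> 0" by (rule summable_LIMSEQ_zero)
    hence "(\<lambda>n. sqrt ((?f \<circ> h) n)) \<longlonglongrightarrow> sqrt 0" by (intro tendsto_intros)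
    hence "(\<lambda>n. norm (\<psi> (h n))) \<longlonglongrightarrow> 0" by simp
    hence "(\<lambda>n. \<psi> (h n)) \<longlonglongrightarrow> 0" by (simp add: tendsto_norm_zero_iff)
  } note * = this
  show "(\<lambda>n. \<psi> (int n)) \<longlonglongrightarrow> 0" by (rule *) (simp add: inj_def)
  show "(\<lambda>n. \<psi> (- int n)) \<longlonglongrightarrow> 0" by (rule *) (simp add: inj_def)
qed

lemma in_l2_of_halves:
  assumes "summable (\<lambda>n. (cmod (\<psi> (int n)))\<^sup>2)" "summable (\<lambda>n. (cmod (\<psi> (- int (Suc n))))\<^sup>2)"
  shows "in_l2 \<psi>"
proof -
  let ?f = "\<lambda>x. (cmod (\<psi> x))\<^sup>2"
  have 1: "?f summable_on range int"
    using summable_on_reindex[of int UNIV ?f] summable_on_UNIV_nonneg_real_iff[of "?f \<circ> int"] assms(1)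
    by (simp add: o_def)
  have 2: "?f summable_on range (\<lambda>n. - int (Suc n))"
    using summable_on_reindex[of "\<lambda>n. - int (Suc n)" UNIV ?f]
      summable_on_UNIV_nonneg_real_iff[of "?f \<circ> (\<lambda>n. - int (Suc n))"] assms(2)
    by (simp add: o_def inj_def)
  have U: "UNIV = range int \<union> range (\<lambda>n. - int (Suc n))"
  proof -
    { fix x :: int
      have "x \<in> range int \<union> range (\<lambda>n. - int (Suc n))"
      proof (cases "x \<ge> 0")
        case True thus ?thesis by (auto intro: image_eqI[where x="nat x"])
      next
        case False thus ?thesis by (auto intro!: image_eqI[where x="nat (-x-1)"])
      qed }
    thus ?thesis by blast
  qed
  have "?f summable_on (range int \<union> range (\<lambda>n. - int (Suc n)))"
    by (rule summable_on_Un_disjoint[OF 1 2]) auto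
  thus ?thesis unfolding in_l2_def using U by simp
qed




lemma side_roots:
  fixes s p r a :: real and \<beta> :: complex
  assumes s: "s = 1 \<or> s = -1" and P: "1 + s*p > 0" and M: "1 - s*p > 0" and r: "r > 0"
    and rr: "r^2 = (1+s*p)*(1-s*p)" and a: "\<bar>a\<bar> < 1" and b: "(cmod \<beta>)^2 = 1 - a^2"
  defines "l1 \<equiv> of_real (r*(s*a+1)) / (of_real (1+s*p) * \<beta>)"
    and "l2 \<equiv> of_real (r*(s*a-1)) / (of_real (1+s*p) * \<beta>)"
  shows "(of_real (1+s*p)*\<beta>) * l1^2 + of_real (- (2* s*r*a)) * l1 + (- of_real (1-s*p) * cnj \<beta>) = 0"
    "(of_real (1+s*p)*\<beta>) * l2^2 + of_real (- (2* s*r*a)) * l2 + (- of_real (1-s*p) * cnj \<beta>) = 0"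
    "l1 \<noteq> l2"
    "cmod l1 < 1 \<longleftrightarrow> s*a < s*p"
    "cmod l2 < 1 \<longleftrightarrow> - s*a < s*p"
    "of_real (1+s*p) * \<beta> * l1 = of_real (r*(s*a+1))"
    "of_real (1+s*p) * \<beta> * l2 = of_real (r*(s*a-1))"
proof -
  have a2: "a^2 < 1" using a abs_square_less_1 by blast
  hence bnz: "\<beta> \<noteq> 0" using b by auto
  have bb: "\<beta> * cnj \<beta> = of_real (1 - a^2)" using b complex_norm_square[of \<beta>] by (simp add: mult.commute)
  have ss: "s* s = 1" using s by auto
  have Pnz: "complex_of_real (1+s*p) \<noteq> 0" using P by (metis of_real_eq_0_iff less_irrefl)
  show e1: "of_real (1+s*p) * \<beta> * l1 = of_real (r*(s*a+1))" unfolding l1_def using bnz Pnz by simp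
  show e2: "of_real (1+s*p) * \<beta> * l2 = of_real (r*(s*a-1))" unfolding l2_def using bnz Pnz by simp
  { fix x :: real and l assume e: "of_real (1+s*p) * \<beta> * l = of_real (r*x)" and x: "x*x - 2* s*a*x - (1 - a^2) = 0"
    have "of_real (1+s*p) * \<beta> * ((of_real (1+s*p)*\<beta>) * l^2 + of_real (- (2* s*r*a)) * l + (- of_real (1-s*p) * cnj \<beta>))
        = (of_real (1+s*p) * \<beta> * l)^2 - of_real(2* s*r*a) * (of_real (1+s*p) * \<beta> * l)
          - of_real((1+s*p)*(1-s*p)) * (\<beta> * cnj \<beta>)"
      by (simp add: algebra_simps power2_eq_square)
    also have "\<dots> = of_real ((r*x)^2 - 2* s*r*a*(r*x) - r^2*(1-a^2))" unfolding e bb rr[symmetric] by simp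
    also have "(r*x)^2 - 2* s*r*a*(r*x) - r^2*(1-a^2) = r^2 * (x*x - 2* s*a*x - (1 - a^2))"
      by (simp add: algebra_simps power2_eq_square)
    also have "\<dots> = 0" using x by simp
    finally have "(of_real (1+s*p)*\<beta>) * l^2 + of_real (- (2* s*r*a)) * l + (- of_real (1-s*p) * cnj \<beta>) = 0"
      using bnz Pnz by simp }
  note root = this
  have xx1: "(s*a+1)*(s*a+1) - 2* s*a*(s*a+1) - (1 - a^2) = a^2*(1 - s* s)" by (simp add: algebra_simps power2_eq_square)
  have xx2: "(s*a-1)*(s*a-1) - 2* s*a*(s*a-1) - (1 - a^2) = a^2*(1 - s* s)" by (simp add: algebra_simps power2_eq_square)
  show "(of_real (1+s*p)*\<beta>) * l1^2 + of_real (- (2* s*r*a)) * l1 + (- of_real (1-s*p) * cnj \<beta>) = 0"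
    by (rule root[OF e1]) (use xx1 ss in simp)
  show "(of_real (1+s*p)*\<beta>) * l2^2 + of_real (- (2* s*r*a)) * l2 + (- of_real (1-s*p) * cnj \<beta>) = 0"
    by (rule root[OF e2]) (use xx2 ss in simp)
  show "l1 \<noteq> l2" unfolding l1_def l2_def using bnz Pnz r by (simp add: divide_cancel_right)
  have cb: "cmod \<beta> > 0" using bnz by simp
  { fix x :: real and l and C :: bool assume e: "of_real (1+s*p) * \<beta> * l = of_real (r*x)" and x: "x > 0"
      and y: "(1-s*p)*x < (1+s*p)*(2-x) \<longleftrightarrow> C" and xx: "1 - a^2 = x*(2-x)"
    have n1: "cmod (complex_of_real (1+s*p)) = 1+s*p" using P by (simp only: norm_of_real abs_of_pos)
    have n2: "cmod (complex_of_real (r*x)) = r*x" using r x by (simp only: norm_of_real abs_of_pos mult_pos_pos)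
    have "cmod l * ((1+s*p) * cmod \<beta>) = r*x" using arg_cong[OF e, of cmod]
      unfolding norm_mult n1 n2 by (simp add: algebra_simps)
    hence cl: "cmod l = r*x / ((1+s*p) * cmod \<beta>)" using P cb
      by (subst eq_divide_eq) (simp add: mult_pos_pos)
    have pos: "(1+s*p) * cmod \<beta> > 0" using P cb by simp
    have "cmod l < 1 \<longleftrightarrow> r*x < (1+s*p) * cmod \<beta>" unfolding cl using pos by (rule divide_less_eq_1_pos)
    also have "\<dots> \<longleftrightarrow> (r*x)^2 < ((1+s*p) * cmod \<beta>)^2"
    proof -
      have A: "((1+s*p) * cmod \<beta>)^2 \<le> (r*x)^2 \<longleftrightarrow> (1+s*p) * cmod \<beta> \<le> r*x"
        by (rule power_mono_iff) (use pos r x in auto)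
      show ?thesis by (metis A not_le)
    qed
    also have "\<dots> \<longleftrightarrow> ((1+s*p)*x) * ((1-s*p)*x) < ((1+s*p)*x) * ((1+s*p)*(2-x))"
    proof -
      have "(r*x)^2 = ((1+s*p)*x) * ((1-s*p)*x)" unfolding power_mult_distrib rr by (simp add: algebra_simps power2_eq_square)
      moreover have "((1+s*p) * cmod \<beta>)^2 = ((1+s*p)*x) * ((1+s*p)*(2-x))" unfolding power_mult_distrib b xx by (simp add: algebra_simps power2_eq_square)
      ultimately show ?thesis by simp
    qed
    also have "\<dots> \<longleftrightarrow> (1-s*p)*x < (1+s*p)*(2-x)" using P x by (simp add: mult_less_cancel_left_pos)
    finally have "cmod l < 1 \<longleftrightarrow> C" using y by simp }
  note md = this
  have sa: "0 < 1 + s*a" "0 < 1 - s*a" using s a by (auto simp: abs_less_iff)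
  have xx3: "1 - a^2 = (1 + s*a)*(1 - s*a)" using ss by (simp add: algebra_simps power2_eq_square)
  show "cmod l1 < 1 \<longleftrightarrow> s*a < s*p"
  proof (rule md)
    show "of_real (1+s*p) * \<beta> * l1 = of_real (r*(1 + s*a))" using e1 by (simp add: algebra_simps)
  qed (use sa xx3 in \<open>auto simp: algebra_simps\<close>)
  have "cmod (-l2) < 1 \<longleftrightarrow> - s*a < s*p"
  proof (rule md)
    show "of_real (1+s*p) * \<beta> * (-l2) = of_real (r*(1 - s*a))" using e2 by (simp add: algebra_simps)
  qed (use sa xx3 in \<open>auto simp: algebra_simps\<close>)
  thus "cmod l2 < 1 \<longleftrightarrow> - s*a < s*p" by simp
qed




lemma halfline:
  fixes u :: "nat \<Rightarrow> complex"
  assumes rec: "\<And>n. c2*u(n+2) + c1*u(n+1) + c0*u n = 0" and c2: "c2 \<noteq> 0"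
    and r1: "c2*l1^2 + c1*l1 + c0 = 0" and r2: "c2*l2^2 + c1*l2 + c0 = 0" and d: "l1 \<noteq> l2"
  shows "\<exists>A B. \<forall>n. u n = A*l1^n + B*l2^n"
proof -
  have "(l1 - l2) * (c2*(l1+l2) + c1) = 0" using r1 r2 by algebra
  hence X: "c2*(l1+l2) + c1 = 0" using d by simp
  hence c1: "c1 = - c2*(l1+l2)" by algebra
  have c0: "c0 = c2*l1*l2" using r1 c1 by algebra
  have rec': "u(n+2) = (l1+l2)*u(n+1) - l1*l2*u n" for n
  proof -
    have "c2 * (u(n+2) - ((l1+l2)*u(n+1) - l1*l2*u n)) = 0" using rec[of n] unfolding c1 c0 by (simp add: algebra_simps)
    thus ?thesis using c2 by simp
  qed
  define A where "A = (u 1 - l2*u 0)/(l1-l2)"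
  define B where "B = (l1*u 0 - u 1)/(l1-l2)"
  have dd: "l1 - l2 \<noteq> 0" using d by simp
  have "u n = A*l1^n + B*l2^n \<and> u (n+1) = A*l1^(n+1) + B*l2^(n+1)" for n
  proof (induction n)
    case 0
    have "A + B = ((u 1 - l2*u 0) + (l1*u 0 - u 1))/(l1-l2)" unfolding A_def B_def by (rule add_divide_distrib[symmetric])
    also have "(u 1 - l2*u 0) + (l1*u 0 - u 1) = (l1-l2)*u 0" by (simp add: algebra_simps)
    finally have 1: "A + B = u 0" using dd by simp
    have "A*l1 + B*l2 = ((u 1 - l2*u 0)*l1 + (l1*u 0 - u 1)*l2)/(l1-l2)" unfolding A_def B_def by (simp add: add_divide_distrib)
    also have "(u 1 - l2*u 0)*l1 + (l1*u 0 - u 1)*l2 = (l1-l2)*u 1" by (simp add: algebra_simps)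
    finally have "A*l1 + B*l2 = u 1" using dd by simp
    with 1 show ?case by simp
  next
    case (Suc n)
    have "u (Suc n + 1) = u (n+2)" by simp
    also have "\<dots> = (l1+l2)*u(n+1) - l1*l2*u n" by (rule rec')
    also have "\<dots> = A*l1^(Suc n+1) + B*l2^(Suc n+1)" using Suc.IH by (simp add: algebra_simps)
    finally show ?case using Suc.IH by simp
  qed
  thus ?thesis by blast
qed

lemma decay:
  fixes u :: "nat \<Rightarrow> complex"
  assumes u: "\<And>n. u n = A*l1^n + B*l2^n" and lim: "u \<longlonglongrightarrow> 0" and d: "l1 \<noteq> l2" and l: "cmod l1 \<ge> 1"
  shows "A = 0"
proof -
  have g: "u (n+1) - l2 * u n = A*(l1-l2)*l1^n" for n unfolding u by (simp add: algebra_simps)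
  have "(\<lambda>n. u (n+1) - l2 * u n) \<longlonglongrightarrow> 0 - l2 * 0"
    by (intro tendsto_intros lim) (use lim LIMSEQ_Suc in auto)
  hence "(\<lambda>n. norm (A*(l1-l2)*l1^n)) \<longlonglongrightarrow> 0" unfolding g using tendsto_norm_zero by fastforce
  moreover have "norm (A*(l1-l2)) \<le> norm (A*(l1-l2)*l1^n)" for n
  proof -
    have "1 \<le> cmod l1 ^ n" using l by (simp add: one_le_power)
    hence "norm (A*(l1-l2)) * 1 \<le> norm (A*(l1-l2)) * cmod l1 ^ n" by (intro mult_left_mono) auto
    thus ?thesis by (simp add: norm_mult norm_power)
  qed
  ultimately have "norm (A*(l1-l2)) \<le> 0" by (intro LIMSEQ_le_const[of _ 0]) auto
  thus ?thesis using d by simp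
qed




lemma Qeps_scale: "Qeps s p q a1 a2 b (cscale c \<psi>) = cscale c (Qeps s p q a1 a2 b \<psi>)"
  by (simp add: Qeps_def cscale_def fun_eq_iff algebra_simps)

locale qw =
  fixes p :: real and q :: complex and a1 a2 :: "int \<Rightarrow> real" and b :: "int \<Rightarrow> complex" and s :: real
  assumes q_nz: "q \<noteq> 0"
    and pq: "p\<^sup>2 + (cmod q)\<^sup>2 = 1"
    and coin1: "\<And>x. (a1 x)\<^sup>2 + (cmod (b x))\<^sup>2 = 1"
    and coin2: "\<And>x. (a2 x)\<^sup>2 + (cmod (b x))\<^sup>2 = 1"
    and coin3: "\<And>x. b x * complex_of_real (a1 x + a2 x) = 0"
    and right: "\<And>x. x \<ge> 1 \<Longrightarrow> a1 x = a1 1 \<and> a2 x = a2 1 \<and> b x = b 1"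
    and left: "\<And>x. x \<le> 0 \<Longrightarrow> a1 x = a1 0 \<and> a2 x = a2 0 \<and> b x = b 0"
    and ntL: "\<not> trivial_coin (a1 0) (a2 0) (b 0)"
    and ntR: "\<not> trivial_coin (a1 1) (a2 1) (b 1)"
    and s: "s = 1 \<or> s = -1"
begin

definition "r = cmod q"
definition "P = 1 + s * p"
definition "M = 1 - s * p"
definition "aL = a1 0"
definition "aR = a1 1"
definition "e = cis (Arg q)"
definition "\<beta>L = e * b 0"
definition "\<beta>R = e * b 1"
definition "K = ker_l2 (Qeps s p q a1 a2 b)"

lemma ss: "s * s = 1" using s by auto
lemma r_pos: "r > 0" using q_nz by (simp add: r_def)
lemma p2: "p^2 < 1" using pq r_pos unfolding r_def by (smt (verit) zero_less_power)
lemma pabs: "\<bar>p\<bar> < 1" using p2 abs_square_less_1 by blast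
lemma P_pos: "P > 0" using pabs s by (auto simp: P_def abs_less_iff)
lemma M_pos: "M > 0" using pabs s by (auto simp: M_def abs_less_iff)
lemma rr: "r^2 = P * M"
proof -
  have "P * M = 1 - (s* s)*p^2" by (simp add: P_def M_def algebra_simps power2_eq_square)
  thus ?thesis using pq ss unfolding r_def by simp
qed
lemma cmod_e: "cmod e = 1" by (simp add: e_def)

lemma a2_neg_gen:
  assumes c1: "(a1 y)\<^sup>2 + (cmod (b y))\<^sup>2 = 1" and c2: "(a2 y)\<^sup>2 + (cmod (b y))\<^sup>2 = 1"
    and c3: "b y * complex_of_real (a1 y + a2 y) = 0" and nt: "\<not> trivial_coin (a1 y) (a2 y) (b y)"
  shows "a2 y = - a1 y"
proof (cases "b y = 0")
  case True
  hence "(a1 y)^2 = 1" "(a2 y)^2 = 1" using c1 c2 by auto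
  hence "a1 y = 1 \<or> a1 y = -1" "a2 y = 1 \<or> a2 y = -1" by (auto simp: power2_eq_1_iff)
  thus ?thesis using nt True by (auto simp: trivial_coin_def)
next
  case False
  hence "complex_of_real (a1 y + a2 y) = 0" using c3 by simp
  hence "a1 y + a2 y = 0" by (metis of_real_eq_0_iff)
  thus ?thesis by linarith
qed

lemma a2_neg: "a2 x = - a1 x"
proof (cases "x \<ge> 1")
  case True
  have "a2 1 = - a1 1" by (rule a2_neg_gen[OF coin1 coin2 coin3 ntR])
  thus ?thesis using right[OF True] by simp
next
  case False
  have "a2 0 = - a1 0" by (rule a2_neg_gen[OF coin1 coin2 coin3 ntL])
  thus ?thesis using left[of x] False by simp
qed

lemma aL_cases: "(b 0 = 0 \<and> (aL = 1 \<or> aL = -1)) \<or> (b 0 \<noteq> 0 \<and> \<bar>aL\<bar> < 1)"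
proof (cases "b 0 = 0")
  case True
  hence "aL^2 = 1" using coin1[of 0] by (simp add: aL_def)
  thus ?thesis using True by (auto simp: power2_eq_1_iff)
next
  case False
  hence "(cmod (b 0))^2 > 0" by simp
  hence "aL^2 < 1" using coin1[of 0] unfolding aL_def by linarith
  thus ?thesis using False abs_square_less_1 by blast
qed

lemma aR_cases: "(b 1 = 0 \<and> (aR = 1 \<or> aR = -1)) \<or> (b 1 \<noteq> 0 \<and> \<bar>aR\<bar> < 1)"
proof (cases "b 1 = 0")
  case True
  hence "aR^2 = 1" using coin1[of 1] by (simp add: aR_def)
  thus ?thesis using True by (auto simp: power2_eq_1_iff)
next
  case False
  hence "(cmod (b 1))^2 > 0" by simp
  hence "aR^2 < 1" using coin1[of 1] unfolding aR_def by linarith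
  thus ?thesis using False abs_square_less_1 by blast
qed

lemma bR_mod: "(cmod \<beta>R)^2 = 1 - aR^2" using coin1[of 1] by (simp add: \<beta>R_def norm_mult cmod_e aR_def)
lemma bL_mod: "(cmod (cnj \<beta>L))^2 = 1 - (-aL)^2" using coin1[of 0] by (simp add: \<beta>L_def norm_mult cmod_e aL_def)

definition Eq :: "(int \<Rightarrow> complex) \<Rightarrow> int \<Rightarrow> bool" where
  "Eq \<psi> x \<longleftrightarrow> of_real P * (e * b(x+1)) * \<psi>(x+1) - of_real M * cnj (e * b x) * \<psi>(x-1)
      - of_real (s*r*(a1(x+1) + a1 x)) * \<psi> x = 0"

lemma Q_zero: "Qeps s p q a1 a2 b \<psi> = (\<lambda>x. 0) \<longleftrightarrow> (\<forall>x. Eq \<psi> x)"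
proof -
  have "Qeps s p q a1 a2 b \<psi> x = (\<i>/2) * (of_real P * (e * b(x+1)) * \<psi>(x+1) - of_real M * cnj (e * b x) * \<psi>(x-1)
      - of_real (s*r*(a1(x+1) + a1 x)) * \<psi> x)" for x
    unfolding Qeps_def P_def M_def e_def r_def a2_neg[of "x+1"] cis_cnj complex_cnj_mult
    by (simp add: algebra_simps)
  note h = this
  have "Qeps s p q a1 a2 b \<psi> x = 0 \<longleftrightarrow> Eq \<psi> x" for x unfolding Eq_def h mult_eq_0_iff by simp
  thus ?thesis unfolding fun_eq_iff by simp
qed

lemma Eq_split: "(\<forall>x. Eq \<psi> x) \<longleftrightarrow> (\<forall>n::nat. Eq \<psi> (int n + 1)) \<and> Eq \<psi> 0 \<and> (\<forall>n::nat. Eq \<psi> (- int n - 1))"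
proof (intro iffI allI)
  fix x assume H: "(\<forall>n::nat. Eq \<psi> (int n + 1)) \<and> Eq \<psi> 0 \<and> (\<forall>n::nat. Eq \<psi> (- int n - 1))"
  show "Eq \<psi> x"
  proof (cases "x \<ge> 1")
    case True thus ?thesis using H[THEN conjunct1, rule_format, of "nat (x-1)"] by simp
  next
    case False
    show ?thesis
    proof (cases "x = 0")
      case True thus ?thesis using H by simp
    next
      case False2: False
      thus ?thesis using False H[THEN conjunct2, THEN conjunct2, rule_format, of "nat (-x-1)"] by simp
    qed
  qed
qed auto

definition "cR2 = of_real P * \<beta>R"
definition "cR1 = of_real (- (2 * s * r * aR))"
definition "cR0 = - of_real M * cnj \<beta>R"
definition "cL2 = of_real (1 + s * (-p)) * cnj \<beta>L"
definition "cL1 = of_real (- (2 * s * r * (-aL)))"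
definition "cL0 = - of_real (1 - s * (-p)) * cnj (cnj \<beta>L)"

lemma EqR: "Eq \<psi> (int n + 1) \<longleftrightarrow> cR2 * \<psi> (int (n+2)) + cR1 * \<psi> (int (n+1)) + cR0 * \<psi> (int n) = 0"
proof -
  have a: "a1 (int n + 1 + 1) = aR" "a1 (int n + 1) = aR" using right[of "int n + 1 + 1"] right[of "int n + 1"] by (auto simp: aR_def)
  have bb: "b (int n + 1 + 1) = b 1" "b (int n + 1) = b 1" using right[of "int n + 1 + 1"] right[of "int n + 1"] by auto
  have i: "int n + 1 + 1 = int (n+2)" "int n + 1 - 1 = int n" "int n + 1 = int (n+1)" by auto
  show ?thesis unfolding Eq_def a bb cR2_def cR1_def cR0_def \<beta>R_def
    apply (simp only: i)
    by (simp add: algebra_simps)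
qed

lemma EqL: "Eq \<psi> (- int n - 1) \<longleftrightarrow> cL2 * \<psi> (- int (n+2)) + cL1 * \<psi> (- int (n+1)) + cL0 * \<psi> (- int n) = 0"
proof -
  have a: "a1 (- int n - 1 + 1) = aL" "a1 (- int n - 1) = aL" using left[of "- int n - 1 + 1"] left[of "- int n - 1"] by (auto simp: aL_def)
  have bb: "b (- int n - 1 + 1) = b 0" "b (- int n - 1) = b 0" using left[of "- int n - 1 + 1"] left[of "- int n - 1"] by auto
  have i: "- int n - 1 + 1 = - int n" "- int n - 1 - 1 = - int (n+2)" "- int n - 1 = - int (n+1)" by auto
  have "Eq \<psi> (- int n - 1) \<longleftrightarrow> - (cL2 * \<psi> (- int (n+2)) + cL1 * \<psi> (- int (n+1)) + cL0 * \<psi> (- int n)) = 0"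
    unfolding Eq_def a bb cL2_def cL1_def cL0_def \<beta>L_def M_def[symmetric] P_def[symmetric]
    apply (simp only: i)
    by (simp add: algebra_simps M_def P_def)
  thus ?thesis by (simp only: neg_equal_0_iff_equal)
qed

lemma Eq0: "Eq \<psi> 0 \<longleftrightarrow> of_real P * \<beta>R * \<psi> 1 - of_real M * cnj \<beta>L * \<psi> (-1) - of_real (s*r*(aR+aL)) * \<psi> 0 = 0"
  unfolding Eq_def \<beta>R_def \<beta>L_def aR_def aL_def by (simp add: algebra_simps)

end



definition mk :: "(nat \<Rightarrow> complex) \<Rightarrow> (nat \<Rightarrow> complex) \<Rightarrow> int \<Rightarrow> complex" where
  "mk f g = (\<lambda>x. if x \<ge> 0 then f (nat x) else g (nat (-x)))"

lemma uniq_form: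
  assumes "\<And>n. \<psi> (int n) = c * l^n" "\<And>n. \<psi> (- int n) = c * m^n"
  shows "\<psi> = cscale c (mk (\<lambda>n. l^n) (\<lambda>n. m^n))"
proof
  fix x show "\<psi> x = cscale c (mk (\<lambda>n. l^n) (\<lambda>n. m^n)) x"
  proof (cases "x \<ge> 0")
    case True thus ?thesis using assms(1)[of "nat x"] by (simp add: mk_def cscale_def)
  next
    case False thus ?thesis using assms(2)[of "nat (-x)"] by (simp add: mk_def cscale_def)
  qed
qed

lemma mk_nz: "mk (\<lambda>n. l^n) (\<lambda>n. m^n) \<noteq> 0"
proof
  assume "mk (\<lambda>n. l^n) (\<lambda>n. m^n) = 0"
  hence "mk (\<lambda>n. l^n) (\<lambda>n. m^n) 0 = 0" by simp
  thus False by (simp add: mk_def)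
qed

lemma summable_geo2: "cmod l < 1 \<Longrightarrow> summable (\<lambda>n. (cmod (l^n))\<^sup>2)"
proof -
  assume "cmod l < 1"
  hence "norm ((cmod l)^2) < 1" by (simp add: abs_square_less_1)
  hence "summable (\<lambda>n. ((cmod l)^2)^n)" by (rule summable_geometric)
  thus ?thesis by (simp add: norm_power power_mult[symmetric] mult.commute)
qed

context qw begin

lemma K_mem: "\<psi> \<in> K \<longleftrightarrow> in_l2 \<psi> \<and> (\<forall>x. Eq \<psi> x)"
  unfolding K_def ker_l2_def Q_zero by simp

lemma kernel_facts:
  assumes "\<psi> \<in> K"
  defines "u \<equiv> \<lambda>n. \<psi> (int n)" and "w \<equiv> \<lambda>n. \<psi> (- int n)"
  shows "\<And>n. cR2*u(n+2) + cR1*u(n+1) + cR0*u n = 0"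
    "\<And>n. cL2*w(n+2) + cL1*w(n+1) + cL0*w n = 0"
    "of_real P * \<beta>R * u 1 - of_real M * cnj \<beta>L * w 1 - of_real (s*r*(aR+aL)) * u 0 = 0"
    "w 0 = u 0" "u \<longlonglongrightarrow> 0" "w \<longlonglongrightarrow> 0"
proof -
  have l2: "in_l2 \<psi>" and E: "\<And>x. Eq \<psi> x" using assms(1) K_mem by auto
  show "cR2*u(n+2) + cR1*u(n+1) + cR0*u n = 0" for n using E[of "int n + 1"] unfolding EqR u_def .
  show "cL2*w(n+2) + cL1*w(n+1) + cL0*w n = 0" for n using E[of "- int n - 1"] unfolding EqL w_def .
  show "of_real P * \<beta>R * u 1 - of_real M * cnj \<beta>L * w 1 - of_real (s*r*(aR+aL)) * u 0 = 0"
    using E[of 0] unfolding Eq0 u_def w_def by simp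
  show "w 0 = u 0" unfolding u_def w_def by simp
  show "u \<longlonglongrightarrow> 0" "w \<longlonglongrightarrow> 0" using in_l2_decay[OF l2] unfolding u_def w_def by auto
qed

lemma exist:
  assumes l: "cmod l < 1" and m: "cmod m < 1"
    and rl: "cR2*l^2 + cR1*l + cR0 = 0" and rm: "cL2*m^2 + cL1*m + cL0 = 0"
    and c0: "of_real P * \<beta>R * l - of_real M * cnj \<beta>L * m - of_real (s*r*(aR+aL)) = 0"
  shows "mk (\<lambda>n. l^n) (\<lambda>n. m^n) \<in> K"
proof -
  let ?v = "mk (\<lambda>n. l^n) (\<lambda>n. m^n)"
  have vp: "?v (int n) = l^n" for n by (simp add: mk_def)
  have vn: "?v (- int n) = m^n" for n
  proof (cases "n = 0")
    case True thus ?thesis by (simp add: mk_def)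
  next
    case False hence "\<not> (- int n \<ge> 0)" by simp
    thus ?thesis by (simp add: mk_def)
  qed
  have "in_l2 ?v"
  proof (rule in_l2_of_halves)
    show "summable (\<lambda>n. (cmod (?v (int n)))\<^sup>2)" unfolding vp by (rule summable_geo2[OF l])
    have "summable (\<lambda>n. (cmod (m^n))\<^sup>2)" by (rule summable_geo2[OF m])
    hence "summable (\<lambda>n. (cmod (m^(Suc n)))\<^sup>2)" by (rule summable_ignore_initial_segment[where k=1, simplified])
    thus "summable (\<lambda>n. (cmod (?v (- int (Suc n))))\<^sup>2)" using vn by presburger
  qed
  moreover have "\<forall>x. Eq ?v x"
    unfolding Eq_split
  proof (intro conjI allI)
    fix n :: nat
    have "cR2 * ?v (int (n+2)) + cR1 * ?v (int (n+1)) + cR0 * ?v (int n) = l^n * (cR2*l^2 + cR1*l + cR0)"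
      unfolding vp by (simp add: algebra_simps power2_eq_square)
    thus "Eq ?v (int n + 1)" unfolding EqR rl by simp
    have "cL2 * ?v (- int (n+2)) + cL1 * ?v (- int (n+1)) + cL0 * ?v (- int n) = m^n * (cL2*m^2 + cL1*m + cL0)"
      unfolding vn by (simp add: algebra_simps power2_eq_square)
    thus "Eq ?v (- int n - 1)" unfolding EqL rm by simp
  next
    have "?v 1 = l" "?v (-1) = m" "?v 0 = 1" using vp[of 1] vn[of 1] vp[of 0] by auto
    thus "Eq ?v 0" unfolding Eq0 using c0 by simp
  qed
  ultimately show ?thesis using K_mem by blast
qed

lemma dim_one:
  assumes v: "v \<in> K" "v \<noteq> 0" and all: "\<And>\<psi>. \<psi> \<in> K \<Longrightarrow> \<exists>c. \<psi> = cscale c v"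
  shows "dQ s p q a1 a2 b = 1"
proof -
  have "K = range (\<lambda>c. cscale c v)"
  proof
    show "K \<subseteq> range (\<lambda>c. cscale c v)" using all by blast
    show "range (\<lambda>c. cscale c v) \<subseteq> K"
    proof
      fix \<phi> assume "\<phi> \<in> range (\<lambda>c. cscale c v)"
      then obtain c where c: "\<phi> = cscale c v" by blast
      have i: "in_l2 v" and z: "Qeps s p q a1 a2 b v = (\<lambda>x. 0)" using v(1) unfolding K_def ker_l2_def by auto
      have "Qeps s p q a1 a2 b (cscale c v) = (\<lambda>x. 0)" unfolding Qeps_scale z by (simp add: cscale_def)
      thus "\<phi> \<in> K" unfolding c K_def ker_l2_def using in_l2_scale[OF i] by simp
    qed
  qed
  thus ?thesis unfolding dQ_def K_def[symmetric] using cdim_one[OF v(2)] by simp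
qed

lemma dim_zero:
  assumes all: "\<And>\<psi>. \<psi> \<in> K \<Longrightarrow> \<psi> = 0"
  shows "dQ s p q a1 a2 b = 0"
proof -
  have "0 \<in> K" unfolding K_def ker_l2_def using in_l2_zero by (simp add: Qeps_def zero_fun_def)
  hence "K = {0}" using all by blast
  thus ?thesis unfolding dQ_def K_def[symmetric] using cdim_zero by simp
qed

end



context qw begin

definition "l1 = of_real (r*(s*aR+1)) / (of_real (1+s*p) * \<beta>R)"
definition "l2 = of_real (r*(s*aR-1)) / (of_real (1+s*p) * \<beta>R)"
definition "n1 = of_real (r*(s*(-aL)+1)) / (of_real (1+s*(-p)) * cnj \<beta>L)"
definition "n2 = of_real (r*(s*(-aL)-1)) / (of_real (1+s*(-p)) * cnj \<beta>L)"

lemma right_roots: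
  assumes "b 1 \<noteq> 0"
  shows "cR2*l1^2 + cR1*l1 + cR0 = 0" "cR2*l2^2 + cR1*l2 + cR0 = 0" "l1 \<noteq> l2"
    "cmod l1 < 1 \<longleftrightarrow> s*aR < s*p" "cmod l2 < 1 \<longleftrightarrow> - s*aR < s*p"
    "of_real P * \<beta>R * l1 = of_real (r*(s*aR+1))" "of_real P * \<beta>R * l2 = of_real (r*(s*aR-1))"
proof -
  have aR: "\<bar>aR\<bar> < 1" using aR_cases assms by auto
  have rr': "r^2 = (1+s*p)*(1-s*p)" using rr unfolding P_def M_def .
  note S = side_roots[OF s P_pos[unfolded P_def] M_pos[unfolded M_def] r_pos rr' aR bR_mod]
  show "cR2*l1^2 + cR1*l1 + cR0 = 0" "cR2*l2^2 + cR1*l2 + cR0 = 0" "l1 \<noteq> l2"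
    "cmod l1 < 1 \<longleftrightarrow> s*aR < s*p" "cmod l2 < 1 \<longleftrightarrow> - s*aR < s*p"
    "of_real P * \<beta>R * l1 = of_real (r*(s*aR+1))" "of_real P * \<beta>R * l2 = of_real (r*(s*aR-1))"
    using S unfolding cR2_def cR1_def cR0_def l1_def l2_def P_def M_def by simp_all
qed

lemma left_roots:
  assumes "b 0 \<noteq> 0"
  shows "cL2*n1^2 + cL1*n1 + cL0 = 0" "cL2*n2^2 + cL1*n2 + cL0 = 0" "n1 \<noteq> n2"
    "cmod n1 < 1 \<longleftrightarrow> s*p < s*aL" "cmod n2 < 1 \<longleftrightarrow> s*p < - s*aL"
    "of_real M * cnj \<beta>L * n1 = of_real (r*(1 - s*aL))" "of_real M * cnj \<beta>L * n2 = of_real (r*(- s*aL - 1))"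
proof -
  have aL: "\<bar>-aL\<bar> < 1" using aL_cases assms by auto
  have rr': "r^2 = (1+s*(-p))*(1-s*(-p))" using rr unfolding P_def M_def by (simp add: algebra_simps)
  have P': "1 + s*(-p) > 0" "1 - s*(-p) > 0" using P_pos M_pos unfolding P_def M_def by simp_all
  note S = side_roots[OF s P'(1) P'(2) r_pos rr' aL bL_mod]
  have Mq: "of_real (1 + s*(-p)) = (of_real M :: complex)" by (simp add: M_def)
  show "cL2*n1^2 + cL1*n1 + cL0 = 0" "cL2*n2^2 + cL1*n2 + cL0 = 0" "n1 \<noteq> n2"
    using S unfolding cL2_def cL1_def cL0_def n1_def n2_def by simp_all
  show "cmod n1 < 1 \<longleftrightarrow> s*p < s*aL" "cmod n2 < 1 \<longleftrightarrow> s*p < - s*aL"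
    using S(4,5) unfolding n1_def n2_def by auto
  show "of_real M * cnj \<beta>L * n1 = of_real (r*(1 - s*aL))" "of_real M * cnj \<beta>L * n2 = of_real (r*(- s*aL - 1))"
    using S(6,7) unfolding n1_def n2_def Mq by (simp_all add: algebra_simps)
qed

end



context qw begin

lemma type3:
  assumes b0: "b 0 \<noteq> 0" and b1: "b 1 \<noteq> 0"
  shows "dQ s p q a1 a2 b = (if (s*aR < s*p \<and> s*p < s*aL) \<or> (- s*aR < s*p \<and> s*p < - s*aL) then 1 else 0)"
proof -
  note R = right_roots[OF b1] and L = left_roots[OF b0]
  have R2: "cR2 \<noteq> 0" using b1 P_pos by (simp add: cR2_def \<beta>R_def e_def)
  have m: "1 + s*(-p) \<noteq> 0" using M_pos by (simp add: M_def)
  have m': "complex_of_real (1 + s*(-p)) \<noteq> 0" using m by (simp only: of_real_eq_0_iff not_False_eq_True)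
  have L2: "cL2 \<noteq> 0" using b0 m' by (simp add: cL2_def \<beta>L_def e_def)
  define cA where "cA = (cmod l1 < 1 \<and> cmod n1 < 1)"
  define cB where "cB = (cmod l2 < 1 \<and> cmod n2 < 1)"
  have key: "\<exists>A B. (\<forall>n. \<psi>(int n) = A*l1^n + B*l2^n) \<and> (\<forall>n. \<psi>(- int n) = A*n1^n + B*n2^n)
      \<and> (\<not> cA \<longrightarrow> A = 0) \<and> (\<not> cB \<longrightarrow> B = 0)" if "\<psi> \<in> K" for \<psi>
  proof -
    note KF = kernel_facts[OF that]
    obtain A B where AB: "\<forall>n. \<psi>(int n) = A*l1^n + B*l2^n"
      using halfline[of cR2 "\<lambda>n. \<psi>(int n)" cR1 cR0 l1 l2, OF KF(1) R2 R(1,2,3)] by blast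
    obtain C D where CD: "\<forall>n. \<psi>(- int n) = C*n1^n + D*n2^n"
      using halfline[of cL2 "\<lambda>n. \<psi>(- int n)" cL1 cL0 n1 n2, OF KF(2) L2 L(1,2,3)] by blast
    have u0: "\<psi> 0 = A + B" and u1: "\<psi> 1 = A*l1 + B*l2" using AB[rule_format, of 0] AB[rule_format, of 1] by auto
    have w0: "\<psi> 0 = C + D" and w1: "\<psi> (-1) = C*n1 + D*n2" using CD[rule_format, of 0] CD[rule_format, of 1] by auto
    have e0: "of_real P * \<beta>R * \<psi> 1 - of_real M * cnj \<beta>L * \<psi> (-1) - of_real (s*r*(aR+aL)) * \<psi> 0 = 0"
      using KF(3) by simp
    have x1: "of_real P * \<beta>R * \<psi> 1 = A * of_real (r*(s*aR+1)) + B * of_real (r*(s*aR-1))"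
      unfolding u1 R(6)[symmetric] R(7)[symmetric] by (simp add: algebra_simps)
    have x2: "of_real M * cnj \<beta>L * \<psi> (-1) = C * of_real (r*(1 - s*aL)) + D * of_real (r*(- s*aL - 1))"
      unfolding w1 L(6)[symmetric] L(7)[symmetric] by (simp add: algebra_simps)
    have "of_real r * (A - B - C + D) = 0"
      using e0 x1 x2 u0 w0 unfolding of_real_mult of_real_add of_real_diff of_real_minus of_real_1 by algebra
    hence r0: "A - B - C + D = 0" using r_pos by simp
    have "2*(A - C) = 0" using r0 u0 w0 by algebra
    hence AC: "C = A" by simp
    have "2*(B - D) = 0" using r0 u0 w0 by algebra
    hence BD: "D = B" by simp
    have uA: "\<not> cmod l1 < 1 \<Longrightarrow> A = 0"
      by (rule decay[of "\<lambda>n. \<psi>(int n)" A l1 B l2]) (use AB KF(5) R(3) in auto)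
    have wA: "\<not> cmod n1 < 1 \<Longrightarrow> A = 0"
      using decay[of "\<lambda>n. \<psi>(- int n)" C n1 D n2] CD KF(6) L(3) AC by auto
    have uB: "\<not> cmod l2 < 1 \<Longrightarrow> B = 0"
      by (rule decay[of "\<lambda>n. \<psi>(int n)" B l2 A l1]) (use AB KF(5) R(3) in \<open>auto simp: add.commute\<close>)
    have wB: "\<not> cmod n2 < 1 \<Longrightarrow> B = 0"
      using decay[of "\<lambda>n. \<psi>(- int n)" D n2 C n1] CD KF(6) L(3) BD by (auto simp: add.commute)
    show ?thesis using AB CD AC BD uA wA uB wB unfolding cA_def cB_def by blast
  qed
  have cAc: "cA \<longleftrightarrow> s*aR < s*p \<and> s*p < s*aL" unfolding cA_def using R(4) L(4) by simp
  have cBc: "cB \<longleftrightarrow> - s*aR < s*p \<and> s*p < - s*aL" unfolding cB_def using R(5) L(5) by simp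
  show ?thesis
  proof (cases "cA \<or> cB")
    case True
    then consider "cA" "\<not> cB" | "cB" "\<not> cA" using cAc cBc by linarith
    thus ?thesis
    proof cases
      case 1
      have c0: "of_real P * \<beta>R * l1 - of_real M * cnj \<beta>L * n1 - of_real (s*r*(aR+aL)) = 0"
        unfolding R(6) L(6) by (simp add: algebra_simps)
      have v: "mk (\<lambda>n. l1^n) (\<lambda>n. n1^n) \<in> K"
        by (rule exist[OF _ _ R(1) L(1) c0]) (use 1 cA_def in auto)
      have "dQ s p q a1 a2 b = 1"
      proof (rule dim_one[OF v mk_nz])
        fix \<psi> assume "\<psi> \<in> K"
        then obtain A B where AB: "\<forall>n. \<psi>(int n) = A*l1^n + B*l2^n" "\<forall>n. \<psi>(- int n) = A*n1^n + B*n2^n"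
          "\<not> cB \<longrightarrow> B = 0" using key by blast
        hence "\<psi> = cscale A (mk (\<lambda>n. l1^n) (\<lambda>n. n1^n))" using 1 by (intro uniq_form) auto
        thus "\<exists>c. \<psi> = cscale c (mk (\<lambda>n. l1^n) (\<lambda>n. n1^n))" by blast
      qed
      thus ?thesis using 1 cAc by simp
    next
      case 2
      have c0: "of_real P * \<beta>R * l2 - of_real M * cnj \<beta>L * n2 - of_real (s*r*(aR+aL)) = 0"
        unfolding R(7) L(7) by (simp add: algebra_simps)
      have v: "mk (\<lambda>n. l2^n) (\<lambda>n. n2^n) \<in> K"
        by (rule exist[OF _ _ R(2) L(2) c0]) (use 2 cB_def in auto)
      have "dQ s p q a1 a2 b = 1"
      proof (rule dim_one[OF v mk_nz])
        fix \<psi> assume "\<psi> \<in> K"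
        then obtain A B where AB: "\<forall>n. \<psi>(int n) = A*l1^n + B*l2^n" "\<forall>n. \<psi>(- int n) = A*n1^n + B*n2^n"
          "\<not> cA \<longrightarrow> A = 0" using key by blast
        hence "\<psi> = cscale B (mk (\<lambda>n. l2^n) (\<lambda>n. n2^n))" using 2 by (intro uniq_form) auto
        thus "\<exists>c. \<psi> = cscale c (mk (\<lambda>n. l2^n) (\<lambda>n. n2^n))" by blast
      qed
      thus ?thesis using 2 cBc by simp
    qed
  next
    case False
    have "dQ s p q a1 a2 b = 0"
    proof (rule dim_zero)
      fix \<psi> assume "\<psi> \<in> K"
      then obtain A B where AB: "\<forall>n. \<psi>(int n) = A*l1^n + B*l2^n" "\<forall>n. \<psi>(- int n) = A*n1^n + B*n2^n"
        "\<not> cA \<longrightarrow> A = 0" "\<not> cB \<longrightarrow> B = 0" using key by blast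
      hence "\<psi> = cscale 0 (mk (\<lambda>n. l2^n) (\<lambda>n. n2^n))" using False by (intro uniq_form) auto
      thus "\<psi> = 0" by (simp add: cscale_def zero_fun_def)
    qed
    thus ?thesis using False cAc cBc by simp
  qed
qed

end



context qw begin

lemma type2:
  assumes b0: "b 0 = 0" and b1: "b 1 \<noteq> 0"
  shows "dQ s p q a1 a2 b = (if aL*aR < s*p then 1 else 0)"
proof -
  note R = right_roots[OF b1]
  have R2: "cR2 \<noteq> 0" using b1 P_pos by (simp add: cR2_def \<beta>R_def e_def)
  have aL: "aL = 1 \<or> aL = -1" using aL_cases b0 by auto
  have bL: "\<beta>L = 0" using b0 by (simp add: \<beta>L_def)
  have cL20: "cL2 = 0" "cL0 = 0" using bL by (simp_all add: cL2_def cL0_def)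
  have cL1: "(cL1::complex) \<noteq> 0" using aL s r_pos by (auto simp: cL1_def)
  have sa: "s*aL = 1 \<or> s*aL = -1" using aL s by auto
  have key: "\<exists>A B. (\<forall>n. \<psi>(int n) = A*l1^n + B*l2^n) \<and> (\<forall>n. \<psi>(- int n) = (A+B)*0^n)
      \<and> (s*aL = 1 \<longrightarrow> B = 0) \<and> (s*aL = -1 \<longrightarrow> A = 0)
      \<and> (\<not> cmod l1 < 1 \<longrightarrow> A = 0) \<and> (\<not> cmod l2 < 1 \<longrightarrow> B = 0)" if "\<psi> \<in> K" for \<psi>
  proof -
    note KF = kernel_facts[OF that]
    obtain A B where AB: "\<forall>n. \<psi>(int n) = A*l1^n + B*l2^n"
      using halfline[of cR2 "\<lambda>n. \<psi>(int n)" cR1 cR0 l1 l2, OF KF(1) R2 R(1,2,3)] by blast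
    have u0: "\<psi> 0 = A + B" and u1: "\<psi> 1 = A*l1 + B*l2" using AB[rule_format, of 0] AB[rule_format, of 1] by auto
    have wz: "\<psi> (- int (Suc n)) = 0" for n
      using KF(2)[of n] cL1 unfolding cL20 by simp
    have W: "\<forall>n. \<psi>(- int n) = (A+B)*0^n"
    proof
      fix n show "\<psi>(- int n) = (A+B)*0^n" using u0 wz by (cases n) auto
    qed
    have e0: "of_real P * \<beta>R * \<psi> 1 - of_real (s*r*(aR+aL)) * \<psi> 0 = 0"
      using KF(3) bL by simp
    have x1: "of_real P * \<beta>R * \<psi> 1 = A * of_real (r*(s*aR+1)) + B * of_real (r*(s*aR-1))"
      unfolding u1 R(6)[symmetric] R(7)[symmetric] by (simp add: algebra_simps)
    have "of_real r * ((1 - of_real (s*aL)) * A - (1 + of_real (s*aL)) * B) = 0"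
      using e0 x1 u0 unfolding of_real_mult of_real_add of_real_diff of_real_minus of_real_1 by algebra
    hence r0: "(1 - of_real (s*aL)) * A - (1 + of_real (s*aL)) * B = 0" using r_pos by simp
    have c1: "s*aL = 1 \<longrightarrow> B = 0"
    proof
      assume "s*aL = 1" hence h: "complex_of_real (s*aL) = 1" by simp
      show "B = 0" using r0 unfolding h by simp
    qed
    have c2: "s*aL = -1 \<longrightarrow> A = 0"
    proof
      assume "s*aL = -1" hence h: "complex_of_real (s*aL) = -1" by simp
      show "A = 0" using r0 unfolding h by simp
    qed
    have uA: "\<not> cmod l1 < 1 \<Longrightarrow> A = 0"
      by (rule decay[of "\<lambda>n. \<psi>(int n)" A l1 B l2]) (use AB KF(5) R(3) in auto)
    have uB: "\<not> cmod l2 < 1 \<Longrightarrow> B = 0"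
      by (rule decay[of "\<lambda>n. \<psi>(int n)" B l2 A l1]) (use AB KF(5) R(3) in \<open>auto simp: add.commute\<close>)
    show ?thesis using AB W c1 c2 uA uB by blast
  qed
  have cL0z: "cL2*0^2 + cL1*0 + cL0 = 0" using cL20 by simp
  have m0: "cmod (0::complex) < 1" by simp
  show ?thesis
  proof (cases "s*aL = 1")
    case sa1: True
    have cond: "aL*aR < s*p \<longleftrightarrow> cmod l1 < 1"
    proof -
      have "aL = s" using sa1 ss s by auto
      thus ?thesis using R(4) by simp
    qed
    show ?thesis
    proof (cases "cmod l1 < 1")
      case True
      have c0: "of_real P * \<beta>R * l1 - of_real M * cnj \<beta>L * 0 - of_real (s*r*(aR+aL)) = 0"
      proof -
        have "of_real P * \<beta>R * l1 - of_real M * cnj \<beta>L * 0 - of_real (s*r*(aR+aL)) = of_real (r*(1 - s*aL))"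
          unfolding R(6) by (simp add: algebra_simps)
        thus ?thesis using sa1 by simp
      qed
      have v: "mk (\<lambda>n. l1^n) (\<lambda>n. 0^n) \<in> K" by (rule exist[OF True m0 R(1) cL0z c0])
      have "dQ s p q a1 a2 b = 1"
      proof (rule dim_one[OF v mk_nz])
        fix \<psi> assume "\<psi> \<in> K"
        then obtain A B where AB: "\<forall>n. \<psi>(int n) = A*l1^n + B*l2^n" "\<forall>n. \<psi>(- int n) = (A+B)*0^n"
          "s*aL = 1 \<longrightarrow> B = 0" using key by blast
        hence "\<psi> = cscale A (mk (\<lambda>n. l1^n) (\<lambda>n. 0^n))" using sa1 by (intro uniq_form) auto
        thus "\<exists>c. \<psi> = cscale c (mk (\<lambda>n. l1^n) (\<lambda>n. 0^n))" by blast
      qed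
      thus ?thesis using True cond by simp
    next
      case False
      have "dQ s p q a1 a2 b = 0"
      proof (rule dim_zero)
        fix \<psi> assume "\<psi> \<in> K"
        then obtain A B where AB: "\<forall>n. \<psi>(int n) = A*l1^n + B*l2^n" "\<forall>n. \<psi>(- int n) = (A+B)*0^n"
          "s*aL = 1 \<longrightarrow> B = 0" "\<not> cmod l1 < 1 \<longrightarrow> A = 0" using key by blast
        hence "\<psi> = cscale 0 (mk (\<lambda>n. l1^n) (\<lambda>n. 0^n))" using sa1 False by (intro uniq_form) auto
        thus "\<psi> = 0" by (simp add: cscale_def zero_fun_def)
      qed
      thus ?thesis using False cond by simp
    qed
  next
    case sa2: False
    hence sa2: "s*aL = -1" using sa by simp
    have cond: "aL*aR < s*p \<longleftrightarrow> cmod l2 < 1"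
    proof -
      have "aL = -s" using sa2 ss s by auto
      thus ?thesis using R(5) by simp
    qed
    show ?thesis
    proof (cases "cmod l2 < 1")
      case True
      have c0: "of_real P * \<beta>R * l2 - of_real M * cnj \<beta>L * 0 - of_real (s*r*(aR+aL)) = 0"
      proof -
        have "of_real P * \<beta>R * l2 - of_real M * cnj \<beta>L * 0 - of_real (s*r*(aR+aL)) = of_real (r*(- 1 - s*aL))"
          unfolding R(7) by (simp add: algebra_simps)
        thus ?thesis using sa2 by simp
      qed
      have v: "mk (\<lambda>n. l2^n) (\<lambda>n. 0^n) \<in> K" by (rule exist[OF True m0 R(2) cL0z c0])
      have "dQ s p q a1 a2 b = 1"
      proof (rule dim_one[OF v mk_nz])
        fix \<psi> assume "\<psi> \<in> K"
        then obtain A B where AB: "\<forall>n. \<psi>(int n) = A*l1^n + B*l2^n" "\<forall>n. \<psi>(- int n) = (A+B)*0^n"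
          "s*aL = -1 \<longrightarrow> A = 0" using key by blast
        hence "\<psi> = cscale B (mk (\<lambda>n. l2^n) (\<lambda>n. 0^n))" using sa2 by (intro uniq_form) auto
        thus "\<exists>c. \<psi> = cscale c (mk (\<lambda>n. l2^n) (\<lambda>n. 0^n))" by blast
      qed
      thus ?thesis using True cond by simp
    next
      case False
      have "dQ s p q a1 a2 b = 0"
      proof (rule dim_zero)
        fix \<psi> assume "\<psi> \<in> K"
        then obtain A B where AB: "\<forall>n. \<psi>(int n) = A*l1^n + B*l2^n" "\<forall>n. \<psi>(- int n) = (A+B)*0^n"
          "s*aL = -1 \<longrightarrow> A = 0" "\<not> cmod l2 < 1 \<longrightarrow> B = 0" using key by blast
        hence "\<psi> = cscale 0 (mk (\<lambda>n. l1^n) (\<lambda>n. 0^n))" using sa2 False by (intro uniq_form) auto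
        thus "\<psi> = 0" by (simp add: cscale_def zero_fun_def)
      qed
      thus ?thesis using False cond by simp
    qed
  qed
qed

end



context qw begin

lemma type2':
  assumes b0: "b 0 \<noteq> 0" and b1: "b 1 = 0"
  shows "dQ s p q a1 a2 b = (if s*p + aL*aR < 0 then 1 else 0)"
proof -
  note L = left_roots[OF b0]
  have m: "1 + s*(-p) \<noteq> 0" using M_pos by (simp add: M_def)
  have m': "complex_of_real (1 + s*(-p)) \<noteq> 0" using m by (simp only: of_real_eq_0_iff not_False_eq_True)
  have L2: "cL2 \<noteq> 0" using b0 m' by (simp add: cL2_def \<beta>L_def e_def)
  have aR: "aR = 1 \<or> aR = -1" using aR_cases b1 by auto
  have bR: "\<beta>R = 0" using b1 by (simp add: \<beta>R_def)
  have cR20: "cR2 = 0" "cR0 = 0" using bR by (simp_all add: cR2_def cR0_def)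
  have cR1: "(cR1::complex) \<noteq> 0" using aR s r_pos by (auto simp: cR1_def)
  have sa: "s*aR = 1 \<or> s*aR = -1" using aR s by auto
  have key: "\<exists>C D. (\<forall>n. \<psi>(int n) = (C+D)*0^n) \<and> (\<forall>n. \<psi>(- int n) = C*n1^n + D*n2^n)
      \<and> (s*aR = 1 \<longrightarrow> C = 0) \<and> (s*aR = -1 \<longrightarrow> D = 0)
      \<and> (\<not> cmod n1 < 1 \<longrightarrow> C = 0) \<and> (\<not> cmod n2 < 1 \<longrightarrow> D = 0)" if "\<psi> \<in> K" for \<psi>
  proof -
    note KF = kernel_facts[OF that]
    obtain C D where CD: "\<forall>n. \<psi>(- int n) = C*n1^n + D*n2^n"
      using halfline[of cL2 "\<lambda>n. \<psi>(- int n)" cL1 cL0 n1 n2, OF KF(2) L2 L(1,2,3)] by blast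
    have w0: "\<psi> 0 = C + D" and w1: "\<psi> (-1) = C*n1 + D*n2" using CD[rule_format, of 0] CD[rule_format, of 1] by auto
    have uz: "\<psi> (int (Suc n)) = 0" for n
      using KF(1)[of n] cR1 unfolding cR20 by simp
    have U: "\<forall>n. \<psi>(int n) = (C+D)*0^n"
    proof
      fix n show "\<psi>(int n) = (C+D)*0^n" using w0 uz by (cases n) auto
    qed
    have e0: "- (of_real M * cnj \<beta>L * \<psi> (-1)) - of_real (s*r*(aR+aL)) * \<psi> 0 = 0"
      using KF(3) bR by simp
    have x2: "of_real M * cnj \<beta>L * \<psi> (-1) = C * of_real (r*(1 - s*aL)) + D * of_real (r*(- s*aL - 1))"
      unfolding w1 L(6)[symmetric] L(7)[symmetric] by (simp add: algebra_simps)
    have "of_real r * ((1 - of_real (s*aR)) * D - (1 + of_real (s*aR)) * C) = 0"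
      using e0 x2 w0 unfolding of_real_mult of_real_add of_real_diff of_real_minus of_real_1 by algebra
    hence r0: "(1 - of_real (s*aR)) * D - (1 + of_real (s*aR)) * C = 0" using r_pos by simp
    have c1: "s*aR = 1 \<longrightarrow> C = 0"
    proof
      assume "s*aR = 1" hence h: "complex_of_real (s*aR) = 1" by simp
      show "C = 0" using r0 unfolding h by simp
    qed
    have c2: "s*aR = -1 \<longrightarrow> D = 0"
    proof
      assume "s*aR = -1" hence h: "complex_of_real (s*aR) = -1" by simp
      show "D = 0" using r0 unfolding h by simp
    qed
    have wC: "\<not> cmod n1 < 1 \<Longrightarrow> C = 0"
      by (rule decay[of "\<lambda>n. \<psi>(- int n)" C n1 D n2]) (use CD KF(6) L(3) in auto)
    have wD: "\<not> cmod n2 < 1 \<Longrightarrow> D = 0"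
      by (rule decay[of "\<lambda>n. \<psi>(- int n)" D n2 C n1]) (use CD KF(6) L(3) in \<open>auto simp: add.commute\<close>)
    show ?thesis using CD U c1 c2 wC wD by blast
  qed
  have cR0z: "cR2*0^2 + cR1*0 + cR0 = 0" using cR20 by simp
  have m0: "cmod (0::complex) < 1" by simp
  show ?thesis
  proof (cases "s*aR = 1")
    case sa1: True
    have cond: "s*p + aL*aR < 0 \<longleftrightarrow> cmod n2 < 1"
    proof -
      have "aR = s" using sa1 ss s by auto
      thus ?thesis using L(5) by (auto simp: algebra_simps)
    qed
    show ?thesis
    proof (cases "cmod n2 < 1")
      case True
      have c0: "of_real P * \<beta>R * 0 - of_real M * cnj \<beta>L * n2 - of_real (s*r*(aR+aL)) = 0"
      proof -
        have "of_real P * \<beta>R * 0 - of_real M * cnj \<beta>L * n2 - of_real (s*r*(aR+aL)) = of_real (r*(1 - s*aR))"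
          unfolding L(7) by (simp add: algebra_simps)
        thus ?thesis using sa1 by simp
      qed
      have v: "mk (\<lambda>n. 0^n) (\<lambda>n. n2^n) \<in> K" by (rule exist[OF m0 True cR0z L(2) c0])
      have "dQ s p q a1 a2 b = 1"
      proof (rule dim_one[OF v mk_nz])
        fix \<psi> assume "\<psi> \<in> K"
        then obtain C D where CD: "\<forall>n. \<psi>(int n) = (C+D)*0^n" "\<forall>n. \<psi>(- int n) = C*n1^n + D*n2^n"
          "s*aR = 1 \<longrightarrow> C = 0" using key by blast
        hence "\<psi> = cscale D (mk (\<lambda>n. 0^n) (\<lambda>n. n2^n))" using sa1 by (intro uniq_form) auto
        thus "\<exists>c. \<psi> = cscale c (mk (\<lambda>n. 0^n) (\<lambda>n. n2^n))" by blast
      qed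
      thus ?thesis using True cond by simp
    next
      case False
      have "dQ s p q a1 a2 b = 0"
      proof (rule dim_zero)
        fix \<psi> assume "\<psi> \<in> K"
        then obtain C D where CD: "\<forall>n. \<psi>(int n) = (C+D)*0^n" "\<forall>n. \<psi>(- int n) = C*n1^n + D*n2^n"
          "s*aR = 1 \<longrightarrow> C = 0" "\<not> cmod n2 < 1 \<longrightarrow> D = 0" using key by blast
        hence "\<psi> = cscale 0 (mk (\<lambda>n. 0^n) (\<lambda>n. n2^n))" using sa1 False by (intro uniq_form) auto
        thus "\<psi> = 0" by (simp add: cscale_def zero_fun_def)
      qed
      thus ?thesis using False cond by simp
    qed
  next
    case sa2: False
    hence sa2: "s*aR = -1" using sa by simp
    have cond: "s*p + aL*aR < 0 \<longleftrightarrow> cmod n1 < 1"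
    proof -
      have "aR = -s" using sa2 ss s by auto
      thus ?thesis using L(4) by (auto simp: algebra_simps)
    qed
    show ?thesis
    proof (cases "cmod n1 < 1")
      case True
      have c0: "of_real P * \<beta>R * 0 - of_real M * cnj \<beta>L * n1 - of_real (s*r*(aR+aL)) = 0"
      proof -
        have "of_real P * \<beta>R * 0 - of_real M * cnj \<beta>L * n1 - of_real (s*r*(aR+aL)) = of_real (r*(- 1 - s*aR))"
          unfolding L(6) by (simp add: algebra_simps)
        thus ?thesis using sa2 by simp
      qed
      have v: "mk (\<lambda>n. 0^n) (\<lambda>n. n1^n) \<in> K" by (rule exist[OF m0 True cR0z L(1) c0])
      have "dQ s p q a1 a2 b = 1"
      proof (rule dim_one[OF v mk_nz])
        fix \<psi> assume "\<psi> \<in> K"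
        then obtain C D where CD: "\<forall>n. \<psi>(int n) = (C+D)*0^n" "\<forall>n. \<psi>(- int n) = C*n1^n + D*n2^n"
          "s*aR = -1 \<longrightarrow> D = 0" using key by blast
        hence "\<psi> = cscale C (mk (\<lambda>n. 0^n) (\<lambda>n. n1^n))" using sa2 by (intro uniq_form) auto
        thus "\<exists>c. \<psi> = cscale c (mk (\<lambda>n. 0^n) (\<lambda>n. n1^n))" by blast
      qed
      thus ?thesis using True cond by simp
    next
      case False
      have "dQ s p q a1 a2 b = 0"
      proof (rule dim_zero)
        fix \<psi> assume "\<psi> \<in> K"
        then obtain C D where CD: "\<forall>n. \<psi>(int n) = (C+D)*0^n" "\<forall>n. \<psi>(- int n) = C*n1^n + D*n2^n"
          "s*aR = -1 \<longrightarrow> D = 0" "\<not> cmod n1 < 1 \<longrightarrow> C = 0" using key by blast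
        hence "\<psi> = cscale 0 (mk (\<lambda>n. 0^n) (\<lambda>n. n1^n))" using sa2 False by (intro uniq_form) auto
        thus "\<psi> = 0" by (simp add: cscale_def zero_fun_def)
      qed
      thus ?thesis using False cond by simp
    qed
  qed
qed

lemma type1:
  assumes b0: "b 0 = 0" and b1: "b 1 = 0"
  shows "dQ s p q a1 a2 b = (if aL*aR < 0 then 1 else 0)"
proof -
  have aR: "aR = 1 \<or> aR = -1" using aR_cases b1 by auto
  have aL: "aL = 1 \<or> aL = -1" using aL_cases b0 by auto
  have bR: "\<beta>R = 0" using b1 by (simp add: \<beta>R_def)
  have bL: "\<beta>L = 0" using b0 by (simp add: \<beta>L_def)
  have cR20: "cR2 = 0" "cR0 = 0" using bR by (simp_all add: cR2_def cR0_def)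
  have cR1: "(cR1::complex) \<noteq> 0" using aR s r_pos by (auto simp: cR1_def)
  have cL20: "cL2 = 0" "cL0 = 0" using bL by (simp_all add: cL2_def cL0_def)
  have cL1: "(cL1::complex) \<noteq> 0" using aL s r_pos by (auto simp: cL1_def)
  have key: "(\<forall>n. \<psi>(int n) = \<psi> 0 * 0^n) \<and> (\<forall>n. \<psi>(- int n) = \<psi> 0 * 0^n) \<and> of_real (s*r*(aR+aL)) * \<psi> 0 = 0"
    if "\<psi> \<in> K" for \<psi>
  proof -
    note KF = kernel_facts[OF that]
    have uz: "\<psi> (int (Suc n)) = 0" for n using KF(1)[of n] cR1 unfolding cR20 by simp
    have wz: "\<psi> (- int (Suc n)) = 0" for n using KF(2)[of n] cL1 unfolding cL20 by simp
    have "\<psi>(int n) = \<psi> 0 * 0^n" for n using uz by (cases n) auto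
    moreover have "\<psi>(- int n) = \<psi> 0 * 0^n" for n using wz by (cases n) auto
    moreover have "of_real (s*r*(aR+aL)) * \<psi> 0 = 0" using KF(3) bR bL by simp
    ultimately show ?thesis by blast
  qed
  have m0: "cmod (0::complex) < 1" by simp
  have cR0z: "cR2*0^2 + cR1*0 + cR0 = 0" using cR20 by simp
  have cL0z: "cL2*0^2 + cL1*0 + cL0 = 0" using cL20 by simp
  show ?thesis
  proof (cases "aL*aR < 0")
    case True
    hence sum0: "aR + aL = 0" using aL aR by auto
    have c0: "of_real P * \<beta>R * 0 - of_real M * cnj \<beta>L * 0 - of_real (s*r*(aR+aL)) = 0"
      using sum0 by simp
    have v: "mk (\<lambda>n. 0^n) (\<lambda>n. 0^n) \<in> K" by (rule exist[OF m0 m0 cR0z cL0z c0])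
    have "dQ s p q a1 a2 b = 1"
    proof (rule dim_one[OF v mk_nz])
      fix \<psi> assume "\<psi> \<in> K"
      note k = key[OF this]
      have "\<psi> = cscale (\<psi> 0) (mk (\<lambda>n. 0^n) (\<lambda>n. 0^n))"
        by (rule uniq_form) (use k in blast)+
      thus "\<exists>c. \<psi> = cscale c (mk (\<lambda>n. 0^n) (\<lambda>n. 0^n))" by blast
    qed
    thus ?thesis using True by simp
  next
    case False
    hence sum0: "aR + aL \<noteq> 0" using aL aR by auto
    have nz0: "s*r*(aR+aL) \<noteq> 0" using sum0 s r_pos by auto
    have nz: "complex_of_real (s*r*(aR+aL)) \<noteq> 0" using nz0 by (simp only: of_real_eq_0_iff not_False_eq_True)
    have "dQ s p q a1 a2 b = 0"
    proof (rule dim_zero)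
      fix \<psi> assume "\<psi> \<in> K"
      note k = key[OF this]
      hence z: "\<psi> 0 = 0" using nz by simp
      have "\<psi> = cscale 0 (mk (\<lambda>n. 0^n) (\<lambda>n. 0^n))"
        by (rule uniq_form) (use k z in simp)+
      thus "\<psi> = 0" by (simp add: cscale_def zero_fun_def)
    qed
    thus ?thesis using False by simp
  qed
qed

end



theorem theorem4p2:
  fixes p :: real and q :: complex and a1 a2 :: "int \<Rightarrow> real" and b :: "int \<Rightarrow> complex"
  assumes q_nz: "q \<noteq> 0"
    and pq: "p\<^sup>2 + (cmod q)\<^sup>2 = 1"
    and coin1: "\<And>x. (a1 x)\<^sup>2 + (cmod (b x))\<^sup>2 = 1"
    and coin2: "\<And>x. (a2 x)\<^sup>2 + (cmod (b x))\<^sup>2 = 1"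
    and coin3: "\<And>x. b x * complex_of_real (a1 x + a2 x) = 0"
    and right: "\<And>x. x \<ge> 1 \<Longrightarrow> a1 x = a1 1 \<and> a2 x = a2 1 \<and> b x = b 1"
    and left: "\<And>x. x \<le> 0 \<Longrightarrow> a1 x = a1 0 \<and> a2 x = a2 0 \<and> b x = b 0"
    and ntL: "\<not> trivial_coin (a1 0) (a2 0) (b 0)"
    and ntR: "\<not> trivial_coin (a1 1) (a2 1) (b 1)"
  shows "\<forall>s \<in> {1, -1::real}.
     (b 0 = 0 \<and> b 1 = 0 \<longrightarrow>
        (a1 0 * a1 1 < 0 \<longrightarrow> dQ s p q a1 a2 b = 1) \<and>
        (a1 0 * a1 1 > 0 \<longrightarrow> dQ s p q a1 a2 b = 0)) \<and>
     (b 0 = 0 \<and> b 1 \<noteq> 0 \<longrightarrow>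
        (- s * p + a1 0 * a1 1 < 0 \<longrightarrow> dQ s p q a1 a2 b = 1) \<and>
        (- s * p + a1 0 * a1 1 \<ge> 0 \<longrightarrow> dQ s p q a1 a2 b = 0)) \<and>
     (b 0 \<noteq> 0 \<and> b 1 = 0 \<longrightarrow>
        (s * p + a1 0 * a1 1 < 0 \<longrightarrow> dQ s p q a1 a2 b = 1) \<and>
        (s * p + a1 0 * a1 1 \<ge> 0 \<longrightarrow> dQ s p q a1 a2 b = 0)) \<and>
     (b 0 \<noteq> 0 \<and> b 1 \<noteq> 0 \<longrightarrow>
        ((a1 1 < s * p \<and> s * p < a1 0) \<or> (a1 0 < - s * p \<and> - s * p < a1 1) \<longrightarrow> dQ s p q a1 a2 b = 1) \<and>
        (\<not> ((a1 1 < s * p \<and> s * p < a1 0) \<or> (a1 0 < - s * p \<and> - s * p < a1 1)) \<longrightarrow> dQ s p q a1 a2 b = 0))"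
proof (intro ballI)
  fix s :: real assume sS: "s \<in> {1, -1}"
  have sv: "s = 1 \<or> s = -1" using sS by simp
  interpret qw p q a1 a2 b s
    by (rule qw.intro[OF q_nz pq coin1 coin2 coin3 right left ntL ntR sv])
  have t1: "b 0 = 0 \<Longrightarrow> b 1 = 0 \<Longrightarrow> dQ s p q a1 a2 b = (if a1 0 * a1 1 < 0 then 1 else 0)"
    using type1 unfolding aL_def aR_def by simp
  have t2: "b 0 = 0 \<Longrightarrow> b 1 \<noteq> 0 \<Longrightarrow> dQ s p q a1 a2 b = (if a1 0 * a1 1 < s*p then 1 else 0)"
    using type2 unfolding aL_def aR_def by simp
  have t2': "b 0 \<noteq> 0 \<Longrightarrow> b 1 = 0 \<Longrightarrow> dQ s p q a1 a2 b = (if s*p + a1 0 * a1 1 < 0 then 1 else 0)"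
    using type2' unfolding aL_def aR_def by simp
  have c3: "((s*a1 1 < s*p \<and> s*p < s*a1 0) \<or> (- s*a1 1 < s*p \<and> s*p < - s*a1 0)) \<longleftrightarrow>
      ((a1 1 < s * p \<and> s * p < a1 0) \<or> (a1 0 < - s * p \<and> - s * p < a1 1))"
  proof (cases "s = 1")
    case True thus ?thesis by auto
  next
    case False hence "s = -1" using sv by simp
    thus ?thesis by auto
  qed
  have t3: "b 0 \<noteq> 0 \<Longrightarrow> b 1 \<noteq> 0 \<Longrightarrow> dQ s p q a1 a2 b =
      (if (a1 1 < s * p \<and> s * p < a1 0) \<or> (a1 0 < - s * p \<and> - s * p < a1 1) then 1 else 0)"
    using type3 c3 unfolding aL_def aR_def by simp
  show "(b 0 = 0 \<and> b 1 = 0 \<longrightarrow>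
        (a1 0 * a1 1 < 0 \<longrightarrow> dQ s p q a1 a2 b = 1) \<and>
        (a1 0 * a1 1 > 0 \<longrightarrow> dQ s p q a1 a2 b = 0)) \<and>
     (b 0 = 0 \<and> b 1 \<noteq> 0 \<longrightarrow>
        (- s * p + a1 0 * a1 1 < 0 \<longrightarrow> dQ s p q a1 a2 b = 1) \<and>
        (- s * p + a1 0 * a1 1 \<ge> 0 \<longrightarrow> dQ s p q a1 a2 b = 0)) \<and>
     (b 0 \<noteq> 0 \<and> b 1 = 0 \<longrightarrow>
        (s * p + a1 0 * a1 1 < 0 \<longrightarrow> dQ s p q a1 a2 b = 1) \<and>
        (s * p + a1 0 * a1 1 \<ge> 0 \<longrightarrow> dQ s p q a1 a2 b = 0)) \<and>
     (b 0 \<noteq> 0 \<and> b 1 \<noteq> 0 \<longrightarrow>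
        ((a1 1 < s * p \<and> s * p < a1 0) \<or> (a1 0 < - s * p \<and> - s * p < a1 1) \<longrightarrow> dQ s p q a1 a2 b = 1) \<and>
        (\<not> ((a1 1 < s * p \<and> s * p < a1 0) \<or> (a1 0 < - s * p \<and> - s * p < a1 1)) \<longrightarrow> dQ s p q a1 a2 b = 0))"
  proof (intro conjI impI)
    show "dQ s p q a1 a2 b = 1" if "b 0 = 0 \<and> b 1 = 0" "a1 0 * a1 1 < 0" using that t1 by simp
    show "dQ s p q a1 a2 b = 0" if "b 0 = 0 \<and> b 1 = 0" "a1 0 * a1 1 > 0" using that t1 by simp
    show "dQ s p q a1 a2 b = 1" if "b 0 = 0 \<and> b 1 \<noteq> 0" "- s * p + a1 0 * a1 1 < 0" using that t2 by simp
    show "dQ s p q a1 a2 b = 0" if "b 0 = 0 \<and> b 1 \<noteq> 0" "- s * p + a1 0 * a1 1 \<ge> 0" using that t2 by simp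
    show "dQ s p q a1 a2 b = 1" if "b 0 \<noteq> 0 \<and> b 1 = 0" "s * p + a1 0 * a1 1 < 0" using that t2' by simp
    show "dQ s p q a1 a2 b = 0" if "b 0 \<noteq> 0 \<and> b 1 = 0" "s * p + a1 0 * a1 1 \<ge> 0" using that t2' by simp
    show "dQ s p q a1 a2 b = 1" if "b 0 \<noteq> 0 \<and> b 1 \<noteq> 0" "(a1 1 < s * p \<and> s * p < a1 0) \<or> (a1 0 < - s * p \<and> - s * p < a1 1)"
      using that t3 by simp
    show "dQ s p q a1 a2 b = 0" if "b 0 \<noteq> 0 \<and> b 1 \<noteq> 0" "\<not> ((a1 1 < s * p \<and> s * p < a1 0) \<or> (a1 0 < - s * p \<and> - s * p < a1 1))"
      using that t3 by simp
  qed
qed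



end
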